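(* Let $\mathbb{D}^2=\{z\in\mathbb{C}:|z|\leq 1\}$ be the closed unit disc, with boundary circle $S^1=\{z:|z|=1\}$. Let $f:\mathbb{D}^2\rightarrow\mathbb{D}^2$ be continuous such that $|f(z)-z|<\frac{\sqrt{3}}{2}$ for all $z\in S^1$. Then there exists a continuous map $g:\mathbb{D}^2\rightarrow\mathbb{D}^2$ such that $\|g\circ f-\mathrm{id}_{\mathbb{D}^2}\|_{\infty}=\sup_{z\in\mathbb{D}^2}|g(f(z))-z|<1$. *)

theory Defs
  imports "HOL-Analysis.Analysis"
begin

end

theory Submission
  imports Defs
begin

lemma norm_sq_diff: "cmod (a - b)^2 = cmod a ^2 + cmod b^2 - 2 * Re (a * cnj b)"
  unfolding cmod_power2 by (simp add: power2_eq_square algebra_simps)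

theorem lemma1:
  fixes f :: "complex \<Rightarrow> complex"
  assumes "continuous_on (cball 0 1) f"
    and "f ` cball 0 1 \<subseteq> cball 0 1"
    and "\<And>z. z \<in> sphere 0 1 \<Longrightarrow> cmod (f z - z) < sqrt 3 / 2"
  shows "\<exists>g :: complex \<Rightarrow> complex. continuous_on (cball 0 1) g \<and> g ` cball 0 1 \<subseteq> cball 0 1 \<and>
           (SUP z\<in>cball 0 1. cmod (g (f z) - z)) < 1"
proof -
  define F where "F = (\<lambda>z. Re (f z * cnj z))"
  define K where "K = cball (0::complex) 1 \<inter> F -` {..1/16}"
  have contF: "continuous_on (cball 0 1) F"
    unfolding F_def by (intro continuous_intros assms(1))
  have "closed K" unfolding K_def
    by (rule continuous_closed_preimage[OF contF]) auto
  moreover have "bounded K" unfolding K_def by (rule bounded_subset[of "cball 0 1"]) auto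
  ultimately have compK: "compact K" by (simp add: compact_eq_bounded_closed)
  have fb: "cmod (f z) \<le> 1" if "z \<in> cball 0 1" for z
    using assms(2) that by (auto simp: image_subset_iff)
  have sph: "F z > 1/8" if "cmod z = 1" for z
  proof -
    have z: "z \<in> sphere 0 1" "z \<in> cball 0 1" using that by auto
    have "cmod (f z - z) ^ 2 < (sqrt 3 / 2) ^ 2"
      using assms(3)[OF z(1)] by (intro power_strict_mono) auto
    also have "\<dots> = 3/4" by (simp add: power_divide)
    finally have "cmod (f z)^2 + 1 - 2 * F z < 3/4"
      using norm_sq_diff[of "f z" z] that unfolding F_def by simp
    moreover have "cmod (f z)^2 \<ge> 0" by simp
    ultimately show ?thesis by linarith
  qed
  have "\<exists>\<rho>. 0 \<le> \<rho> \<and> \<rho> < 1 \<and> (\<forall>z\<in>K. cmod z \<le> \<rho>)"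
  proof (cases "K = {}")
    case True then show ?thesis by (intro exI[of _ 0]) auto
  next
    case False
    from compact_attains_sup[OF compact_continuous_image[OF continuous_on_norm[OF continuous_on_id] compK]] False
    obtain z0 where z0: "z0 \<in> K" "\<forall>z\<in>K. cmod z \<le> cmod z0" by auto
    have "cmod z0 \<le> 1" "F z0 \<le> 1/16" using z0(1) unfolding K_def by auto
    moreover have "cmod z0 \<noteq> 1" using sph[of z0] calculation by auto
    ultimately show ?thesis using z0 by (intro exI[of _ "cmod z0"]) auto
  qed
  then obtain \<rho> where rho: "0 \<le> \<rho>" "\<rho> < 1" "\<forall>z\<in>K. cmod z \<le> \<rho>" by blast
  define e where "e = min (1/16) ((1-\<rho>)/2)"
  have e: "0 < e" "e \<le> 1/16" "e \<le> (1-\<rho>)/2" using rho unfolding e_def by (auto simp: min_def)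
  define g where "g = (\<lambda>w. complex_of_real e * w)"
  define B where "B = max (sqrt (1 - e/16)) ((1+\<rho>)/2)"
  have B1: "B < 1" using e rho unfolding B_def by (auto simp: real_sqrt_lt_1_iff)
  have bound: "cmod (g (f z) - z) \<le> B" if z: "z \<in> cball 0 1" for z
  proof (cases "F z \<le> 1/16")
    case True
    then have "z \<in> K" using z unfolding K_def by auto
    then have "cmod z \<le> \<rho>" using rho by auto
    have "cmod (g (f z) - z) \<le> cmod (g (f z)) + cmod z" by (rule norm_triangle_ineq4)
    moreover have "cmod (g (f z)) = e * cmod (f z)" unfolding g_def using e by (simp add: norm_mult)
    moreover have "e * cmod (f z) \<le> e" using fb[OF z] e by (simp add: mult_left_le)
    ultimately have "cmod (g (f z) - z) \<le> (1+\<rho>)/2" using \<open>cmod z \<le> \<rho>\<close> e(3) by argo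
    then show ?thesis unfolding B_def by (simp add: le_max_iff_disj)
  next
    case False
    have zn: "cmod z ^ 2 \<le> 1" using z by (simp add: power_le_one)
    have fn: "cmod (f z) ^ 2 \<le> 1" using fb[OF z] by (simp add: power_le_one)
    have "cmod (g (f z) - z)^2 = e^2 * cmod (f z)^2 + cmod z ^2 - 2 * e * F z"
      using norm_sq_diff[of "g (f z)" z] e unfolding g_def F_def
      by (simp add: norm_mult power_mult_distrib algebra_simps)
    also have "\<dots> \<le> e^2 + 1 - e/8"
    proof -
      have "e^2 * cmod (f z)^2 \<le> e^2" using fn by (simp add: mult_left_le)
      moreover have "2 * e * F z \<ge> 2 * e * (1/16)" using False e by simp
      ultimately show ?thesis using zn by linarith
    qed
    also have "\<dots> \<le> 1 - e/16"
    proof -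
      have "e * e \<le> (1/16) * e" using e by (intro mult_right_mono) auto
      then show ?thesis by (simp add: power2_eq_square)
    qed
    finally have "cmod (g (f z) - z) \<le> sqrt (1 - e/16)"
      by (intro real_le_rsqrt)
    then show ?thesis unfolding B_def by (simp add: le_max_iff_disj)
  qed
  have "(SUP z\<in>cball 0 1. cmod (g (f z) - z)) \<le> B"
    by (rule cSUP_least) (use bound in auto)
  moreover have "continuous_on (cball 0 1) g" unfolding g_def by (intro continuous_intros)
  moreover have "g ` cball 0 1 \<subseteq> cball 0 1"
  proof
    fix y assume "y \<in> g ` cball 0 1"
    then obtain w where w: "w \<in> cball 0 1" "y = g w" by auto
    have "cmod y = e * cmod w" using w e unfolding g_def by (simp add: norm_mult)
    also have "\<dots> \<le> 1" using w e by (simp add: mult_le_one)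
    finally show "y \<in> cball 0 1" by simp
  qed
  ultimately show ?thesis using B1 by (intro exI[of _ g]) auto
qed

end
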